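(* Let $X$ be a finite set, let $\mathcal{F}$ be a closure system on $X$, let $\Sigma$ be the canonical direct basis of $\mathcal{F}$, and let $A\subseteq X$. Let $\mathcal{F}(A)=\mathcal{F}\cup\{F\cap A:F\in\mathcal{F}\}$. Then the modified body-building formula $\Sigma^*(A)$ is the canonical direct basis of the closure system $\mathcal{F}(A)$.
   Context: An implication on $X$ is $C\rightarrow d$ with $C\subseteq X$, $d\in X$; a set $Y$ satisfies it if $C\not\subseteq Y$ or $d\in Y$, otherwise it fails on $Y$. A set $\Sigma$ of implications is a basis of a closure system $\mathcal{F}$ if $\mathcal{F}$ is exactly the family of subsets of $X$ satisfying all implications of $\Sigma$. With $\varphi$ the closure operator of $\mathcal{F}$ ($\varphi(Y)$ = smallest member of $\mathcal{F}$ containing $Y$), the canonical direct basis of $\mathcal{F}$ is the set of all implications $C\rightarrow d$ such that $d\notin C$, $d\in\varphi(C)$, and $d\notin\varphi(C')$ for every proper subset $C'\subsetneq C$. Modified body-building formula: $\Sigma_t(A)$ is the set of implications of $\Sigma$ holding on $A$ and $\Sigma_f(A)$ the set of those failing on $A$ ($C\subseteq A$, $d\notin A$). For $(C\rightarrow d)\in\Sigma$ let $E_C=\{x\in X: \{x\}=G\setminus C \text{ for some implication } (G\rightarrow d)\in\Sigma\}$ (implications with the same consequent $d$). For $\sigma=(C\rightarrow d)\in\Sigma_f(A)$ let $\sigma^*(A)=\{C\cup\{x\}\rightarrow d: x\in X\setminus(A\cup\{d\}\cup E_C)\}$, and $\Sigma^*(A)=\Sigma_t(A)\cup\bigcup_{\sigma\in\Sigma_f(A)}\sigma^*(A)$.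 *)

theory Defs
  imports Main
begin

type_synonym 'a impl = "'a set \<times> 'a"

definition closure_system :: "'a set \<Rightarrow> 'a set set \<Rightarrow> bool" where
  "closure_system X F \<longleftrightarrow> F \<subseteq> Pow X \<and> X \<in> F \<and>
     (\<forall>S. S \<subseteq> F \<and> S \<noteq> {} \<longrightarrow> \<Inter>S \<in> F)"

definition clo :: "'a set set \<Rightarrow> 'a set \<Rightarrow> 'a set" where
  "clo F Y = \<Inter>{Z \<in> F. Y \<subseteq> Z}"

definition canonical_direct_basis :: "'a set \<Rightarrow> 'a set set \<Rightarrow> 'a impl set" where
  "canonical_direct_basis X F =
     {(C, d). C \<subseteq> X \<and> d \<in> X \<and> d \<notin> C \<and> d \<in> clo F C \<and>
              (\<forall>C'. C' \<subset> C \<longrightarrow> d \<notin> clo F C')}"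

definition holds_on :: "'a impl \<Rightarrow> 'a set \<Rightarrow> bool" where
  "holds_on \<sigma> Y \<longleftrightarrow> \<not> fst \<sigma> \<subseteq> Y \<or> snd \<sigma> \<in> Y"

definition Sigma_t :: "'a impl set \<Rightarrow> 'a set \<Rightarrow> 'a impl set" where
  "Sigma_t \<Sigma> A = {\<sigma> \<in> \<Sigma>. holds_on \<sigma> A}"

definition Sigma_f :: "'a impl set \<Rightarrow> 'a set \<Rightarrow> 'a impl set" where
  "Sigma_f \<Sigma> A = {\<sigma> \<in> \<Sigma>. \<not> holds_on \<sigma> A}"

definition E_set :: "'a set \<Rightarrow> 'a impl set \<Rightarrow> 'a set \<Rightarrow> 'a \<Rightarrow> 'a set" where
  "E_set X \<Sigma> C d = {x \<in> X. \<exists>G. (G, d) \<in> \<Sigma> \<and> {x} = G - C}"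

definition sigma_star :: "'a set \<Rightarrow> 'a impl set \<Rightarrow> 'a set \<Rightarrow> 'a impl \<Rightarrow> 'a impl set" where
  "sigma_star X \<Sigma> A \<sigma> =
     {(fst \<sigma> \<union> {x}, snd \<sigma>) | x. x \<in> X - (A \<union> {snd \<sigma>} \<union> E_set X \<Sigma> (fst \<sigma>) (snd \<sigma>))}"

definition body_building :: "'a set \<Rightarrow> 'a impl set \<Rightarrow> 'a set \<Rightarrow> 'a impl set" where
  "body_building X \<Sigma> A =
     Sigma_t \<Sigma> A \<union> (\<Union>\<sigma> \<in> Sigma_f \<Sigma> A. sigma_star X \<Sigma> A \<sigma>)"

end

theory Submission
  imports Defs
begin

lemma min_sub: "finite D \<Longrightarrow> P D \<Longrightarrow> \<exists>G\<subseteq>D. P G \<and> (\<forall>G'. G' \<subset> G \<longrightarrow> \<not> P G')"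
proof (induction "card D" arbitrary: D rule: less_induct)
  case less
  show ?case
  proof (cases "\<exists>G'. G' \<subset> D \<and> P G'")
    case True
    then obtain G' where g: "G' \<subset> D" "P G'" by blast
    have c: "card G' < card D" using psubset_card_mono[OF less.prems(1) g(1)] .
    have f: "finite G'" using g(1) less.prems(1) finite_subset by blast
    obtain G where "G \<subseteq> G'" "P G" "\<forall>G''. G'' \<subset> G \<longrightarrow> \<not> P G''"
      using less.hyps[OF c f g(2)] by blast
    then show ?thesis using g(1) by (meson order.trans psubset_imp_subset)
  next
    case False
    then show ?thesis using less.prems by blast
  qed
qed

lemma clo_mono: "Y \<subseteq> Y' \<Longrightarrow> clo F Y \<subseteq> clo F Y'"
  by (auto simp: clo_def)

lemma cloA:
  assumes "X \<in> F" "Y \<subseteq> X"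
  shows "d \<in> clo (F \<union> {Z \<inter> A | Z. Z \<in> F}) Y \<longleftrightarrow> d \<in> clo F Y \<and> (Y \<subseteq> A \<longrightarrow> d \<in> A)"
proof
  assume h: "d \<in> clo (F \<union> {Z \<inter> A | Z. Z \<in> F}) Y"
  have "d \<in> clo F Y" using h by (auto simp: clo_def)
  moreover have "Y \<subseteq> A \<longrightarrow> d \<in> A"
  proof
    assume "Y \<subseteq> A"
    then have "X \<inter> A \<in> {Z \<in> F \<union> {Z \<inter> A | Z. Z \<in> F}. Y \<subseteq> Z}" using assms by auto
    then show "d \<in> A" using h unfolding clo_def by blast
  qed
  ultimately show "d \<in> clo F Y \<and> (Y \<subseteq> A \<longrightarrow> d \<in> A)" by blast
next
  assume h: "d \<in> clo F Y \<and> (Y \<subseteq> A \<longrightarrow> d \<in> A)"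
  show "d \<in> clo (F \<union> {Z \<inter> A | Z. Z \<in> F}) Y"
    unfolding clo_def
  proof (rule InterI)
    fix W assume "W \<in> {Z \<in> F \<union> {Z \<inter> A | Z. Z \<in> F}. Y \<subseteq> Z}"
    then have "W \<in> F \<and> Y \<subseteq> W \<or> (\<exists>Z\<in>F. W = Z \<inter> A \<and> Y \<subseteq> Z \<and> Y \<subseteq> A)" by auto
    then show "d \<in> W" using h unfolding clo_def by blast
  qed
qed

theorem mainTheorem2:
  fixes X :: "'a set" and F :: "'a set set" and \<Sigma> :: "'a impl set" and A :: "'a set"
  assumes "finite X"
    and "closure_system X F"
    and "\<Sigma> = canonical_direct_basis X F"
    and "A \<subseteq> X"
  shows "body_building X \<Sigma> A = canonical_direct_basis X (F \<union> {Y \<inter> A | Y. Y \<in> F})"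
proof -
  define FA where "FA = F \<union> {Y \<inter> A | Y. Y \<in> F}"
  have XF: "X \<in> F" using assms(2) by (simp add: closure_system_def)
  have cA: "\<And>Y d. Y \<subseteq> X \<Longrightarrow> d \<in> clo FA Y \<longleftrightarrow> d \<in> clo F Y \<and> (Y \<subseteq> A \<longrightarrow> d \<in> A)"
    unfolding FA_def using cloA[OF XF] by blast
  have S: "\<And>C d. (C,d) \<in> \<Sigma> \<longleftrightarrow> C \<subseteq> X \<and> d \<in> X \<and> d \<notin> C \<and> d \<in> clo F C \<and>
              (\<forall>C'. C' \<subset> C \<longrightarrow> d \<notin> clo F C')"
    using assms(3) by (simp add: canonical_direct_basis_def)
  have T: "\<And>C d. (C,d) \<in> canonical_direct_basis X FA \<longleftrightarrow> C \<subseteq> X \<and> d \<in> X \<and> d \<notin> C \<and> d \<in> clo FA C \<and>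
              (\<forall>C'. C' \<subset> C \<longrightarrow> d \<notin> clo FA C')"
    by (simp add: canonical_direct_basis_def)
  have BB: "\<And>D d. (D,d) \<in> body_building X \<Sigma> A \<longleftrightarrow>
      ((D,d) \<in> \<Sigma> \<and> (\<not> D \<subseteq> A \<or> d \<in> A)) \<or>
      (\<exists>C x. (C,d) \<in> \<Sigma> \<and> C \<subseteq> A \<and> d \<notin> A \<and> D = C \<union> {x} \<and> x \<in> X \<and> x \<notin> A \<and> x \<noteq> d
             \<and> x \<notin> E_set X \<Sigma> C d)"
    unfolding body_building_def Sigma_t_def Sigma_f_def sigma_star_def holds_on_def
    by auto
  have minG: "\<And>D d. D \<subseteq> X \<Longrightarrow> d \<in> X \<Longrightarrow> d \<notin> D \<Longrightarrow> d \<in> clo F D \<Longrightarrow>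
      \<exists>G\<subseteq>D. (G,d) \<in> \<Sigma>"
  proof -
    fix D d assume h: "D \<subseteq> X" "d \<in> X" "d \<notin> D" "d \<in> clo F D"
    have "finite D" using h assms(1) finite_subset by blast
    have "\<exists>G\<subseteq>D. d \<in> clo F G \<and> (\<forall>G'. G' \<subset> G \<longrightarrow> d \<notin> clo F G')"
      using min_sub[of D "\<lambda>G. d \<in> clo F G"] \<open>finite D\<close> h(4) by blast
    then obtain G where
      "G \<subseteq> D" "d \<in> clo F G" "\<forall>G'. G' \<subset> G \<longrightarrow> d \<notin> clo F G'" by blast
    moreover have "d \<notin> G" using h \<open>G \<subseteq> D\<close> by blast
    ultimately have "(G,d) \<in> \<Sigma>" using h S[of G d] by blast
    then show "\<exists>G\<subseteq>D. (G,d) \<in> \<Sigma>" using \<open>G \<subseteq> D\<close> by blast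
  qed
  have "(D,d) \<in> body_building X \<Sigma> A \<longleftrightarrow> (D,d) \<in> canonical_direct_basis X FA" for D d
  proof
    assume "(D,d) \<in> body_building X \<Sigma> A"
    then consider "(D,d) \<in> \<Sigma>" "\<not> D \<subseteq> A \<or> d \<in> A"
      | C x where "(C,d) \<in> \<Sigma>" "C \<subseteq> A" "d \<notin> A" "D = C \<union> {x}" "x \<in> X" "x \<notin> A" "x \<noteq> d"
             "x \<notin> E_set X \<Sigma> C d"
      using BB by blast
    then show "(D,d) \<in> canonical_direct_basis X FA"
    proof cases
      case 1
      have s: "D \<subseteq> X" "d \<in> X" "d \<notin> D" "d \<in> clo F D" "\<forall>C'. C' \<subset> D \<longrightarrow> d \<notin> clo F C'"
        using S[of D d] 1(1) by auto
      have "d \<in> clo FA D" using cA[OF s(1)] s 1(2) by blast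
      moreover have "\<forall>C'. C' \<subset> D \<longrightarrow> d \<notin> clo FA C'"
      proof (intro allI impI)
        fix C' assume "C' \<subset> D"
        then have "C' \<subseteq> X" "d \<notin> clo F C'" using s by auto
        then show "d \<notin> clo FA C'" using cA by blast
      qed
      ultimately show ?thesis unfolding T using s by blast
    next
      case 2
      have C: "C \<subseteq> X" "d \<in> X" "d \<notin> C" "d \<in> clo F C" "\<forall>C'. C' \<subset> C \<longrightarrow> d \<notin> clo F C'"
        using 2(1) S by auto
      have DX: "D \<subseteq> X" using 2 C by auto
      have dD: "d \<notin> D" using 2 C by auto
      have dcD: "d \<in> clo FA D" using cA[OF DX] clo_mono[of C D F] 2 C by auto
      have "d \<notin> clo FA C'" if "C' \<subset> D" for C'
      proof
        assume a: "d \<in> clo FA C'"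
        have C'X: "C' \<subseteq> X" using that DX by auto
        have a2: "d \<in> clo F C'" "\<not> C' \<subseteq> A" using a cA[OF C'X] 2 by auto
        have xC': "x \<in> C'" using a2(2) that 2 by auto
        have xC: "x \<notin> C" using 2 by auto
        have dC': "d \<notin> C'" using that dD by auto
        obtain G where G: "G \<subseteq> C'" "(G,d) \<in> \<Sigma>" using minG[OF C'X C(2) dC' a2(1)] by blast
        show False
        proof (cases "x \<in> G")
          case True
          have "G - C = {x}" using True G that 2 by auto
          then have "x \<in> E_set X \<Sigma> C d" unfolding E_set_def using G 2 by auto
          then show False using 2 by blast
        next
          case False
          have "G \<subset> C" using False G that 2 xC' xC by auto
          then show False using C G S by blast
        qed
      qed
      then show ?thesis unfolding T using DX C dD dcD by blast
    qed
  next
    assume "(D,d) \<in> canonical_direct_basis X FA"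
    then have D: "D \<subseteq> X" "d \<in> X" "d \<notin> D" "d \<in> clo FA D" "\<forall>C'. C' \<subset> D \<longrightarrow> d \<notin> clo FA C'"
      using T by auto
    have dF: "d \<in> clo F D" "D \<subseteq> A \<longrightarrow> d \<in> A" using cA[OF D(1)] D(4) by auto
    have sub: "C' \<subseteq> A \<and> d \<notin> A" if "C' \<subset> D" "d \<in> clo F C'" for C'
    proof -
      have "C' \<subseteq> X" using that D(1) by auto
      moreover have "d \<notin> clo FA C'" using D(5) that by blast
      ultimately show ?thesis using cA that(2) by blast
    qed
    show "(D,d) \<in> body_building X \<Sigma> A"
    proof (cases "(D,d) \<in> \<Sigma>")
      case True
      then show ?thesis using BB dF by blast
    next
      case False
      have "\<not> (\<forall>C'. C' \<subset> D \<longrightarrow> d \<notin> clo F C')" using S[of D d] D(1-3) dF(1) False by blast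
      then obtain C' where C': "C' \<subset> D" "d \<in> clo F C'" by blast
      have C'X: "C' \<subseteq> X" using C' D by auto
      obtain G where G: "G \<subseteq> C'" "(G,d) \<in> \<Sigma>" using minG[OF C'X D(2)] C' D by blast
      have GD: "G \<subset> D" using G C' by auto
      have Gc: "d \<in> clo F G" using G S by auto
      have GA: "G \<subseteq> A" "d \<notin> A" using sub[OF GD Gc] by auto
      then obtain x where x: "x \<in> D" "x \<notin> A" using dF by blast
      have Deq: "D = G \<union> {x}"
      proof (rule ccontr)
        assume "D \<noteq> G \<union> {x}"
        then have "G \<union> {x} \<subset> D" using GD x by auto
        moreover have "d \<in> clo F (G \<union> {x})" using Gc clo_mono[of G "G \<union> {x}" F] by auto
        ultimately show False using sub x by blast
      qed
      have xE: "x \<notin> E_set X \<Sigma> G d"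
      proof
        assume "x \<in> E_set X \<Sigma> G d"
        then obtain G' where G': "(G',d) \<in> \<Sigma>" "{x} = G' - G" unfolding E_set_def by auto
        have "G' \<subseteq> D" using G' Deq by auto
        moreover have "G' \<noteq> D" using G' False by auto
        moreover have "d \<in> clo F G'" using G' S by auto
        ultimately have "G' \<subseteq> A" using sub by blast
        then show False using G' x by auto
      qed
      show ?thesis unfolding BB using G(2) GA Deq x D xE by blast
    qed
  qed
  note eq = this
  have "body_building X \<Sigma> A = canonical_direct_basis X FA"
  proof (rule set_eqI)
    fix p :: "'a impl"
    show "p \<in> body_building X \<Sigma> A \<longleftrightarrow> p \<in> canonical_direct_basis X FA"
      using eq[of "fst p" "snd p"] by simp
  qed
  then show ?thesis unfolding FA_def .
qed

end
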